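(* Let $n\ge1$, let $H_n:\mathbb{Z}^n\to\mathbb{R}$ be a finitely supported kernel and $x,y:\mathbb{Z}\to\mathbb{R}$ finitely supported signals. Then $$\big\|H_n*(x+y)^n-H_n*x^n\big\|_2\le\min\left(\|H_n\|_2\sum_{k=0}^{n-1}\Big(\frac{en}{k}\Big)^k\|x\|_1^k\|y\|_1^{n-k},\ \|H_n\|_1\sum_{k=0}^{n-1}\Big(\frac{en}{k}\Big)^k\|x\|_{2k}^k\|y\|_{2(n-k)}^{n-k}\right),$$ where $e$ is the base of the natural logarithm.
   Context: For a kernel $H:\mathbb{Z}^n\to\mathbb{R}$ and signals $x_1,\dots,x_n:\mathbb{Z}\to\mathbb{R}$, the order-$n$ convolution is $(H*[x_1,\dots,x_n])(t)=\sum_{(\tau_1,\dots,\tau_n)\in\mathbb{Z}^n}H(\tau_1,\dots,\tau_n)\prod_{i=1}^n x_i(t-\tau_i)$, and $H*x^n$ denotes $H*[x,\dots,x]$ ($n$ copies). For a function $A$ on $\mathbb{Z}^d$, $\|A\|_p=(\sum_\tau|A(\tau)|^p)^{1/p}$. In the $k=0$ terms, $(en/k)^k$ and $\|x\|_{2k}^k$ are interpreted as $1$. *)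

theory Defs
  imports "HOL-Analysis.Analysis"
begin

text \<open>Points of Z^n are integer lists of length n; kernels are functions on int lists,
  considered on the lists of length n. Signals are functions int => real.\<close>

definition lattice :: "nat \<Rightarrow> int list set" where
  "lattice n = {\<tau>. length \<tau> = n}"

definition volt_conv :: "nat \<Rightarrow> (int list \<Rightarrow> real) \<Rightarrow> (int \<Rightarrow> real) \<Rightarrow> int \<Rightarrow> real" where
  "volt_conv n H x t = (\<Sum>\<^sub>\<infinity>\<tau>\<in>lattice n. H \<tau> * (\<Prod>i<n. x (t - \<tau> ! i)))"

definition sig_norm :: "real \<Rightarrow> (int \<Rightarrow> real) \<Rightarrow> real" where
  "sig_norm p x = (\<Sum>\<^sub>\<infinity>t\<in>UNIV. \<bar>x t\<bar> powr p) powr (1 / p)"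

definition ker_norm :: "nat \<Rightarrow> real \<Rightarrow> (int list \<Rightarrow> real) \<Rightarrow> real" where
  "ker_norm n p H = (\<Sum>\<^sub>\<infinity>\<tau>\<in>lattice n. \<bar>H \<tau>\<bar> powr p) powr (1 / p)"

end

theory Submission
  imports Defs
begin

lemma binom_bound: "real (n choose k) \<le> (exp 1 * real n / real k) ^ k"
proof (cases "k = 0")
  case True then show ?thesis by simp
next
  case False
  have sm: "summable (\<lambda>j. real k ^ j /\<^sub>R fact j)"
    using exp_converges[of "real k"] by (simp add: sums_iff)
  have "(\<Sum>j\<in>{k}. real k ^ j /\<^sub>R fact j) \<le> (\<Sum>j. real k ^ j /\<^sub>R fact j)"
    by (rule sum_le_suminf[OF sm]) auto
  also have "\<dots> = exp (real k)" using exp_converges[of "real k"] by (simp add: sums_iff)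
  finally have f: "real k ^ k / fact k \<le> exp (real k)" by (simp add: divide_inverse mult.commute)
  have ek: "exp (real k) = exp 1 ^ k" using exp_of_nat_mult[of k 1] by simp
  have b: "real (n choose k) * fact k \<le> real n ^ k"
    using binomial_fact_pow[of n k] by (metis of_nat_fact of_nat_le_iff of_nat_mult of_nat_power)
  have kp: "real k ^ k > 0" using False by simp
  have "real (n choose k) \<le> real n ^ k / fact k" using b by (simp add: field_simps)
  also have "\<dots> = real n ^ k / real k ^ k * (real k ^ k / fact k)" using kp by simp
  also have "\<dots> \<le> real n ^ k / real k ^ k * exp 1 ^ k"
    using f ek by (intro mult_left_mono) auto
  also have "\<dots> = (exp 1 * real n / real k) ^ k" by (simp add: power_divide power_mult_distrib)
  finally show ?thesis .
qed

lemma infsum_supp: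
  fixes f :: "'a \<Rightarrow> real"
  assumes "finite A" "A \<subseteq> B" "\<And>t. t \<in> B \<Longrightarrow> t \<notin> A \<Longrightarrow> f t = 0"
  shows "infsum f B = sum f A"
proof -
  have "infsum f B = infsum f A"
    by (rule infsum_cong_neutral) (use assms in auto)
  then show ?thesis using assms by simp
qed

lemma gen_norm:
  fixes f :: "'a \<Rightarrow> real"
  assumes "finite A" "A \<subseteq> B" "\<And>t. t \<in> B \<Longrightarrow> t \<notin> A \<Longrightarrow> f t = 0"
  shows "(\<Sum>\<^sub>\<infinity>t\<in>B. \<bar>f t\<bar> powr p) powr (1/p) = (\<Sum>t\<in>A. \<bar>f t\<bar> powr p) powr (1/p)"
  using infsum_supp[of A B "\<lambda>t. \<bar>f t\<bar> powr p"] assms by simp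

lemma sig_norm_fin:
  assumes "finite A" "\<And>t. t \<notin> A \<Longrightarrow> f t = 0"
  shows "sig_norm p f = (\<Sum>t\<in>A. \<bar>f t\<bar> powr p) powr (1/p)"
  unfolding sig_norm_def using gen_norm[of A UNIV f p] assms by simp

lemma sig_norm_2:
  assumes "finite A" "\<And>t. t \<notin> A \<Longrightarrow> f t = 0"
  shows "sig_norm 2 f = L2_set f A"
proof -
  have "sig_norm 2 f = (\<Sum>t\<in>A. \<bar>f t\<bar> powr 2) powr (1/2)" by (rule sig_norm_fin[OF assms])
  also have "\<dots> = (\<Sum>t\<in>A. (f t)^2) powr (1/2)" by (simp add: powr_numeral)
  also have "\<dots> = L2_set f A" unfolding L2_set_def by (rule powr_half_sqrt) (auto intro: sum_nonneg)
  finally show ?thesis .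
qed

lemma sig_norm_1:
  assumes "finite A" "\<And>t. t \<notin> A \<Longrightarrow> f t = 0"
  shows "sig_norm 1 f = (\<Sum>t\<in>A. \<bar>f t\<bar>)"
proof -
  have "sig_norm 1 f = (\<Sum>t\<in>A. \<bar>f t\<bar> powr 1) powr (1/1)" by (rule sig_norm_fin[OF assms])
  then show ?thesis by (simp add: sum_nonneg)
qed

lemma sig_norm_pow:
  assumes "finite A" "\<And>t. t \<notin> A \<Longrightarrow> f t = 0" "m > 0"
  shows "sig_norm (2 * real m) f ^ (2*m) = (\<Sum>t\<in>A. \<bar>f t\<bar> ^ (2*m))"
proof -
  have e: "2 * real m = real (2*m)" by simp
  have "sig_norm (2 * real m) f = (\<Sum>t\<in>A. \<bar>f t\<bar> ^ (2*m)) powr (1 / real (2*m))"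
  proof -
    have "sig_norm (2 * real m) f = (\<Sum>t\<in>A. \<bar>f t\<bar> powr (2 * real m)) powr (1 / (2 * real m))"
      using sig_norm_fin[of A f "2 * real m"] assms by blast
    also have "(\<Sum>t\<in>A. \<bar>f t\<bar> powr (2 * real m)) = (\<Sum>t\<in>A. \<bar>f t\<bar> ^ (2*m))"
      unfolding e using assms(3) by (intro sum.cong refl powr_realpow') auto
    finally show ?thesis unfolding e .
  qed
  moreover have "(s powr (1 / real (2*m))) ^ (2*m) = s" if "s \<ge> 0" for s :: real
  proof (cases "s = 0")
    case True then show ?thesis using assms(3) by simp
  next
    case False then show ?thesis using assms(3) that by (simp add: powr_power)
  qed
  ultimately show ?thesis by (simp add: sum_nonneg)
qed

lemma L2_set_sum_le:
  fixes f :: "'i \<Rightarrow> 'a \<Rightarrow> real"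
  assumes "finite I"
  shows "L2_set (\<lambda>t. \<Sum>i\<in>I. f i t) A \<le> (\<Sum>i\<in>I. L2_set (f i) A)"
  using assms
proof (induction I rule: finite_induct)
  case empty then show ?case by (simp add: L2_set_def)
next
  case (insert j I)
  have "L2_set (\<lambda>t. \<Sum>i\<in>insert j I. f i t) A = L2_set (\<lambda>t. f j t + (\<Sum>i\<in>I. f i t)) A"
    using insert by simp
  also have "\<dots> \<le> L2_set (f j) A + L2_set (\<lambda>t. \<Sum>i\<in>I. f i t) A"
    by (rule L2_set_triangle_ineq)
  also have "\<dots> \<le> L2_set (f j) A + (\<Sum>i\<in>I. L2_set (f i) A)" using insert by simp
  finally show ?case using insert by simp
qed

lemma shift_sum:
  fixes g :: "int \<Rightarrow> real"
  assumes "finite A" "finite Sf" "\<And>s. s \<notin> Sf \<Longrightarrow> g s = 0" "\<And>s. g s \<ge> 0"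
  shows "(\<Sum>t\<in>A. g (t - a)) \<le> (\<Sum>s\<in>Sf. g s)"
proof -
  have "(\<Sum>t\<in>A. g (t - a)) = (\<Sum>s\<in>(\<lambda>t. t - a) ` A. g s)"
    by (subst sum.reindex) (auto simp: inj_on_def)
  also have "\<dots> \<le> (\<Sum>s\<in>(\<lambda>t. t - a) ` A \<union> Sf. g s)"
    by (rule sum_mono2) (use assms in auto)
  also have "\<dots> = (\<Sum>s\<in>Sf. g s)"
    by (rule sum.mono_neutral_right) (use assms in auto)
  finally show ?thesis .
qed

lemma sum_mult_le:
  fixes a b :: "'a \<Rightarrow> real"
  assumes "finite A" "\<And>t. a t \<ge> 0" "\<And>t. b t \<ge> 0"
  shows "(\<Sum>t\<in>A. a t * b t) \<le> (\<Sum>t\<in>A. a t) * (\<Sum>t\<in>A. b t)"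
proof -
  have "(\<Sum>t\<in>A. a t * b t) \<le> (\<Sum>t\<in>A. a t * (\<Sum>t\<in>A. b t))"
    by (rule sum_mono, rule mult_left_mono) (use assms in \<open>auto intro: member_le_sum\<close>)
  then show ?thesis by (simp add: sum_distrib_right)
qed

lemma prod_shift_bound:
  fixes f :: "int \<Rightarrow> real"
  assumes "finite I" "card I = m" "m > 0" "finite A" "finite Sf" "\<And>s. s \<notin> Sf \<Longrightarrow> f s = 0"
  shows "(\<Sum>t\<in>A. \<Prod>i\<in>I. (f (t - a i))^2) \<le> (\<Sum>s\<in>Sf. \<bar>f s\<bar> ^ (2*m))"
proof -
  have Ine: "I \<noteq> {}" using assms by auto
  have pt: "(\<Prod>i\<in>I. (f (t - a i))^2) \<le> (\<Sum>i\<in>I. \<bar>f (t - a i)\<bar> ^ (2*m) / m)" for t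
  proof -
    have r: "(c ^ (2*m)) powr (1 / real m) = c^2" if "c \<ge> 0" for c :: real
    proof -
      have "c ^ (2*m) = (c^2)^m" by (simp add: power_mult)
      also have "\<dots> = (c^2) powr (real m)" using assms(3) by (simp add: powr_realpow')
      finally show ?thesis using assms(3) by (simp add: powr_powr)
    qed
    have "(\<Prod>i\<in>I. \<bar>f (t - a i)\<bar> ^ (2*m)) powr (1 / card I) = (\<Prod>i\<in>I. (\<bar>f (t - a i)\<bar> ^ (2*m)) powr (1 / card I))"
      by (auto intro!: prod_powr_distrib)
    also have "\<dots> = (\<Prod>i\<in>I. (f (t - a i))^2)" using assms(2) by (simp add: r)
    finally have "(\<Prod>i\<in>I. (f (t - a i))^2) = (\<Prod>i\<in>I. \<bar>f (t - a i)\<bar> ^ (2*m)) powr (1 / card I)" ..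
    also have "\<dots> \<le> (\<Sum>i\<in>I. \<bar>f (t - a i)\<bar> ^ (2*m) / card I)"
      using assms Ine by (intro arith_geom_mean) auto
    finally show ?thesis using assms(2) by simp
  qed
  have "(\<Sum>t\<in>A. \<Prod>i\<in>I. (f (t - a i))^2) \<le> (\<Sum>t\<in>A. \<Sum>i\<in>I. \<bar>f (t - a i)\<bar> ^ (2*m) / m)"
    by (rule sum_mono) (rule pt)
  also have "\<dots> = (\<Sum>i\<in>I. (\<Sum>t\<in>A. \<bar>f (t - a i)\<bar> ^ (2*m)) / m)"
    by (subst sum.swap) (simp add: sum_divide_distrib)
  also have "\<dots> \<le> (\<Sum>i\<in>I. (\<Sum>s\<in>Sf. \<bar>f s\<bar> ^ (2*m)) / m)"
    by (intro sum_mono divide_right_mono shift_sum[where g="\<lambda>s. \<bar>f s\<bar> ^ (2*m)"]) (use assms in auto)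
  also have "\<dots> = (\<Sum>s\<in>Sf. \<bar>f s\<bar> ^ (2*m))" using assms by simp
  finally show ?thesis .
qed


lemma count_subsets:
  fixes c :: "nat \<Rightarrow> real"
  shows "(\<Sum>S\<in>Pow {..<n} - {{}}. c (n - card S)) = (\<Sum>k<n. real (n choose k) * c k)"
proof -
  let ?P = "Pow {..<n} - {{}}"
  have fin: "finite ?P" by simp
  have img: "card ` ?P \<subseteq> {1..n}"
  proof
    fix j assume "j \<in> card ` ?P"
    then obtain S where S: "S \<in> ?P" "j = card S" by auto
    then have "S \<subseteq> {..<n}" "S \<noteq> {}" by auto
    moreover then have "finite S" using finite_subset by blast
    ultimately show "j \<in> {1..n}" using S card_mono[of "{..<n}" S]
      by (auto simp: card_gt_0_iff Suc_le_eq)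
  qed
  have "(\<Sum>S\<in>?P. c (n - card S)) = (\<Sum>j\<in>{1..n}. \<Sum>S\<in>{S. S \<in> ?P \<and> card S = j}. c (n - card S))"
    by (rule sum.group[OF fin _ img, symmetric]) simp
  also have "\<dots> = (\<Sum>j\<in>{1..n}. real (n choose j) * c (n - j))"
  proof (rule sum.cong[OF refl])
    fix j assume j: "j \<in> {1..n}"
    have "{S. S \<in> ?P \<and> card S = j} = {S. S \<subseteq> {..<n} \<and> card S = j}"
      using j by auto
    then have "(\<Sum>S\<in>{S. S \<in> ?P \<and> card S = j}. c (n - card S)) = (\<Sum>S\<in>{S. S \<subseteq> {..<n} \<and> card S = j}. c (n - j))"
      by (intro sum.cong) auto
    also have "\<dots> = real (n choose j) * c (n - j)"
      using n_subsets[of "{..<n}" j] by simp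
    finally show "(\<Sum>S\<in>{S. S \<in> ?P \<and> card S = j}. c (n - card S)) = real (n choose j) * c (n - j)" .
  qed
  also have "\<dots> = (\<Sum>k<n. real (n choose k) * c k)"
    apply (rule sum.reindex_bij_witness[of _ "\<lambda>k. n - k" "\<lambda>j. n - j"])
    apply (auto simp flip: binomial_symmetric)
    done
  finally show ?thesis .
qed


lemma L2_scale: "L2_set (\<lambda>t. c * f t) A = \<bar>c\<bar> * L2_set f A"
  by (simp add: L2_set_def power_mult_distrib real_sqrt_mult flip: sum_distrib_left)

theorem lemma23:
  fixes n :: nat and H :: "int list \<Rightarrow> real" and x y :: "int \<Rightarrow> real"
  assumes "n \<ge> 1"
    and "finite {\<tau>\<in>lattice n. H \<tau> \<noteq> 0}"
    and "finite {t. x t \<noteq> 0}"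
    and "finite {t. y t \<noteq> 0}"
  shows "sig_norm 2 (\<lambda>t. volt_conv n H (\<lambda>s. x s + y s) t - volt_conv n H x t)
    \<le> min (ker_norm n 2 H * (\<Sum>k<n. (exp 1 * real n / real k) ^ k
                  * sig_norm 1 x ^ k * sig_norm 1 y ^ (n - k)))
          (ker_norm n 1 H * (\<Sum>k<n. (exp 1 * real n / real k) ^ k
                  * sig_norm (2 * real k) x ^ k * sig_norm (2 * real (n - k)) y ^ (n - k)))"
proof -
  define N where "N = {..<n}"
  define SH where "SH = {\<tau>\<in>lattice n. H \<tau> \<noteq> 0}"
  define Z where "Z = {t. x t \<noteq> 0} \<union> {t. y t \<noteq> 0}"
  define Tset where "Tset = (\<lambda>(\<tau>,s). s + \<tau>!0) ` (SH \<times> Z)"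
  define P where "P = Pow N - {{}}"
  define Q where "Q = (\<lambda>S (\<tau>::int list) t. (\<Prod>i\<in>S. y (t - \<tau>!i)) * (\<Prod>i\<in>N-S. x (t - \<tau>!i)))"
  define TS where "TS = (\<lambda>S t. \<Sum>\<tau>\<in>SH. H \<tau> * Q S \<tau> t)"
  define D where "D = (\<lambda>t. volt_conv n H (\<lambda>s. x s + y s) t - volt_conv n H x t)"
  have finSH: "finite SH" using assms(2) SH_def by simp
  have finZ: "finite Z" using assms(3,4) by (simp add: Z_def)
  have finT: "finite Tset" using finSH finZ by (simp add: Tset_def)
  have finN: "finite N" and finP: "finite P" by (simp_all add: N_def P_def)
  have n0: "0 \<in> N" using assms(1) by (simp add: N_def)
  have xZ: "\<And>s. s \<notin> Z \<Longrightarrow> x s = 0" and yZ: "\<And>s. s \<notin> Z \<Longrightarrow> y s = 0" by (auto simp: Z_def)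
  have vc: "volt_conv n H z t = (\<Sum>\<tau>\<in>SH. H \<tau> * (\<Prod>i<n. z (t - \<tau>!i)))" for z t
    unfolding volt_conv_def SH_def by (rule infsum_supp) (use assms(2) in auto)
  have Dsum: "D t = (\<Sum>S\<in>P. TS S t)" for t
  proof -
    have e: "(\<Prod>i\<in>N. x (t-\<tau>!i) + y (t-\<tau>!i)) - (\<Prod>i\<in>N. x (t-\<tau>!i)) = (\<Sum>S\<in>P. Q S \<tau> t)" for \<tau>
    proof -
      have "(\<Prod>i\<in>N. y (t-\<tau>!i) + x (t-\<tau>!i)) = (\<Sum>S\<in>Pow N. (\<Prod>i\<in>S. y (t-\<tau>!i)) * (\<Prod>i\<in>N-S. x (t-\<tau>!i)))"
        by (rule prod_add[OF finN])
      also have "\<dots> = (\<Prod>i\<in>N. x (t-\<tau>!i)) + (\<Sum>S\<in>P. Q S \<tau> t)"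
        unfolding P_def Q_def using finN by (subst sum.remove[of _ "{}"]) auto
      finally show ?thesis by (simp add: add.commute)
    qed
    have "D t = (\<Sum>\<tau>\<in>SH. H \<tau> * ((\<Prod>i\<in>N. x (t-\<tau>!i) + y (t-\<tau>!i)) - (\<Prod>i\<in>N. x (t-\<tau>!i))))"
      unfolding D_def vc N_def by (simp add: sum_subtractf right_diff_distrib)
    also have "\<dots> = (\<Sum>\<tau>\<in>SH. \<Sum>S\<in>P. H \<tau> * Q S \<tau> t)" by (simp add: e sum_distrib_left)
    also have "\<dots> = (\<Sum>S\<in>P. TS S t)" unfolding TS_def by (rule sum.swap)
    finally show ?thesis .
  qed
  have TS0: "TS S t = 0" if "S \<in> P" "t \<notin> Tset" for S t
  proof -
    have "Q S \<tau> t = 0" if "\<tau> \<in> SH" for \<tau>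
    proof -
      have "t - \<tau>!0 \<notin> Z"
      proof
        assume "t - \<tau>!0 \<in> Z"
        then have "t \<in> Tset" unfolding Tset_def using \<open>\<tau>\<in>SH\<close>
          by (auto intro!: image_eqI[where x="(\<tau>, t - \<tau>!0)"])
        then show False using \<open>t \<notin> Tset\<close> by simp
      qed
      hence x0: "x (t-\<tau>!0) = 0" "y (t - \<tau>!0) = 0" using xZ yZ by auto
      have finS: "finite S" using \<open>S \<in> P\<close> finN by (auto simp: P_def intro: finite_subset)
      show ?thesis
      proof (cases "0 \<in> S")
        case True
        then have "(\<Prod>i\<in>S. y (t - \<tau>!i)) = 0" using x0 finS by (auto intro!: prod_zero)
        then show ?thesis by (simp add: Q_def)
      next
        case False
        then have "(\<Prod>i\<in>N-S. x (t - \<tau>!i)) = 0" using x0 finN n0 by (auto intro!: prod_zero)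
        then show ?thesis by (simp add: Q_def)
      qed
    qed
    then show ?thesis by (simp add: TS_def)
  qed
  have D0: "D t = 0" if "t \<notin> Tset" for t
    using TS0 that by (simp add: Dsum)
  have step1: "sig_norm 2 D \<le> (\<Sum>S\<in>P. L2_set (TS S) Tset)"
  proof -
    have "sig_norm 2 D = L2_set D Tset" by (rule sig_norm_2[OF finT D0])
    also have "\<dots> = L2_set (\<lambda>t. \<Sum>S\<in>P. TS S t) Tset" by (rule L2_set_cong) (simp_all add: Dsum)
    also have "\<dots> \<le> (\<Sum>S\<in>P. L2_set (TS S) Tset)" by (rule L2_set_sum_le[OF finP])
    finally show ?thesis .
  qed
  have Sfacts: "S \<subseteq> N" "S \<noteq> {}" "finite S" "card S \<le> n" "card (N - S) = n - card S" "card S > 0"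
    if "S \<in> P" for S
  proof -
    show SN: "S \<subseteq> N" "S \<noteq> {}" using that by (auto simp: P_def)
    show fS: "finite S" using SN finN finite_subset by blast
    show "card S \<le> n" using card_mono[OF finN SN(1)] by (simp add: N_def)
    show "card (N - S) = n - card S" using card_Diff_subset[OF fS SN(1)] by (simp add: N_def)
    show "card S > 0" using fS SN by (simp add: card_gt_0_iff)
  qed
  have kn1: "ker_norm n 1 H = (\<Sum>\<tau>\<in>SH. \<bar>H \<tau>\<bar>)"
  proof -
    have "ker_norm n 1 H = (\<Sum>\<tau>\<in>SH. \<bar>H \<tau>\<bar> powr 1) powr (1/1)"
      unfolding ker_norm_def by (rule gen_norm) (use finSH in \<open>auto simp: SH_def\<close>)
    then show ?thesis by (simp add: sum_nonneg)
  qed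
  have kn2: "ker_norm n 2 H = sqrt (\<Sum>\<tau>\<in>SH. (H \<tau>)^2)"
  proof -
    have "ker_norm n 2 H = (\<Sum>\<tau>\<in>SH. \<bar>H \<tau>\<bar> powr 2) powr (1/2)"
      unfolding ker_norm_def by (rule gen_norm) (use finSH in \<open>auto simp: SH_def\<close>)
    also have "\<dots> = (\<Sum>\<tau>\<in>SH. (H \<tau>)^2) powr (1/2)" by (simp add: powr_numeral)
    also have "\<dots> = sqrt (\<Sum>\<tau>\<in>SH. (H \<tau>)^2)" by (rule powr_half_sqrt) (auto intro: sum_nonneg)
    finally show ?thesis .
  qed
  have sn0: "sig_norm p f \<ge> 0" for p f unfolding sig_norm_def by simp
  define c1 where "c1 = (\<lambda>k. sig_norm 1 x ^ k * sig_norm 1 y ^ (n - k))"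
  define c2 where "c2 = (\<lambda>k. sig_norm (2 * real k) x ^ k * sig_norm (2 * real (n - k)) y ^ (n - k))"
  have B1: "L2_set (TS S) Tset \<le> ker_norm n 2 H * c1 (n - card S)" if SP: "S \<in> P" for S
  proof -
    note SF = Sfacts[OF SP]
    define m where "m = card S"
    define k where "k = n - m"
    have nk: "n - k = m" "card (N - S) = k" using SF by (auto simp: k_def m_def)
    define z where "z = (\<lambda>i. if i \<in> S then y else x)"
    have zZ: "z i s = 0" if "s \<notin> Z" for i s using xZ yZ that by (simp add: z_def)
    have Qz: "\<bar>Q S \<tau> t\<bar> = (\<Prod>i\<in>N. \<bar>z i (t - \<tau>!i)\<bar>)" for \<tau> t
    proof -
      have "(\<Prod>i\<in>N. \<bar>z i (t - \<tau>!i)\<bar>) = (\<Prod>i\<in>N-S. \<bar>z i (t - \<tau>!i)\<bar>) * (\<Prod>i\<in>S. \<bar>z i (t - \<tau>!i)\<bar>)"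
        by (rule prod.subset_diff[OF SF(1) finN])
      also have "\<dots> = (\<Prod>i\<in>N-S. \<bar>x (t - \<tau>!i)\<bar>) * (\<Prod>i\<in>S. \<bar>y (t - \<tau>!i)\<bar>)"
        by (intro arg_cong2[where f="(*)"] prod.cong) (auto simp: z_def)
      finally show ?thesis by (simp add: Q_def abs_mult abs_prod mult.commute)
    qed
    define M where "M = (\<Prod>i\<in>N. \<Sum>s\<in>Z. \<bar>z i s\<bar>)"
    have Mv: "M = c1 (n - card S)"
    proof -
      have "M = (\<Prod>i\<in>N-S. \<Sum>s\<in>Z. \<bar>z i s\<bar>) * (\<Prod>i\<in>S. \<Sum>s\<in>Z. \<bar>z i s\<bar>)"
        unfolding M_def by (rule prod.subset_diff[OF SF(1) finN])
      also have "\<dots> = (\<Prod>i\<in>N-S. \<Sum>s\<in>Z. \<bar>x s\<bar>) * (\<Prod>i\<in>S. \<Sum>s\<in>Z. \<bar>y s\<bar>)"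
        by (intro arg_cong2[where f="(*)"] prod.cong) (auto simp: z_def)
      also have "\<dots> = sig_norm 1 x ^ k * sig_norm 1 y ^ m"
        using sig_norm_1[OF finZ xZ] sig_norm_1[OF finZ yZ] nk by (simp add: m_def)
      finally show ?thesis unfolding c1_def k_def m_def nk[unfolded k_def m_def] .
    qed
    have M0: "M \<ge> 0" unfolding M_def by (auto intro!: prod_nonneg sum_nonneg)
    have sumtau: "(\<Sum>\<tau>\<in>SH. \<bar>Q S \<tau> t\<bar>) \<le> M" for t
    proof -
      define SH' where "SH' = {\<tau>\<in>SH. \<forall>i\<in>N. t - \<tau>!i \<in> Z}"
      define \<phi> where "\<phi> = (\<lambda>\<tau>::int list. restrict (\<lambda>i. t - \<tau>!i) N)"
      have "(\<Sum>\<tau>\<in>SH. \<bar>Q S \<tau> t\<bar>) = (\<Sum>\<tau>\<in>SH'. \<bar>Q S \<tau> t\<bar>)"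
      proof (rule sum.mono_neutral_right[OF finSH])
        show "SH' \<subseteq> SH" by (auto simp: SH'_def)
        show "\<forall>\<tau>\<in>SH - SH'. \<bar>Q S \<tau> t\<bar> = 0"
        proof
          fix \<tau> assume "\<tau> \<in> SH - SH'"
          then obtain i where "i \<in> N" "t - \<tau>!i \<notin> Z" by (auto simp: SH'_def)
          then show "\<bar>Q S \<tau> t\<bar> = 0" unfolding Qz using finN zZ by (auto intro!: prod_zero)
        qed
      qed
      also have "\<dots> = (\<Sum>\<tau>\<in>SH'. \<Prod>i\<in>N. \<bar>z i (\<phi> \<tau> i)\<bar>)"
        unfolding Qz \<phi>_def by (intro sum.cong prod.cong) auto
      also have "\<dots> = (\<Sum>g\<in>\<phi> ` SH'. \<Prod>i\<in>N. \<bar>z i (g i)\<bar>)"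
      proof (rule sum.reindex[symmetric, unfolded comp_def])
        show "inj_on \<phi> SH'"
        proof (rule inj_onI)
          fix a b assume ab: "a \<in> SH'" "b \<in> SH'" "\<phi> a = \<phi> b"
          have len: "length a = n" "length b = n" using ab by (auto simp: SH'_def SH_def lattice_def)
          have "a!i = b!i" if "i < n" for i
          proof -
            have "\<phi> a i = \<phi> b i" using ab by simp
            then show ?thesis using that by (simp add: \<phi>_def N_def)
          qed
          then show "a = b" using len by (intro nth_equalityI) auto
        qed
      qed
      also have "\<dots> \<le> (\<Sum>g\<in>PiE N (\<lambda>_. Z). \<Prod>i\<in>N. \<bar>z i (g i)\<bar>)"
      proof (rule sum_mono2)
        show "finite (PiE N (\<lambda>_. Z))" using finN finZ by (simp add: finite_PiE)
        show "\<phi> ` SH' \<subseteq> PiE N (\<lambda>_. Z)" by (auto simp: \<phi>_def SH'_def restrict_PiE_iff)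
      qed (auto intro: prod_nonneg)
      also have "\<dots> = M" unfolding M_def by (rule prod_sum_PiE[symmetric]) (use finN finZ in auto)
      finally show ?thesis .
    qed
    have sumt: "(\<Sum>t\<in>Tset. \<bar>Q S \<tau> t\<bar>) \<le> M" for \<tau>
    proof -
      define M0 where "M0 = (\<Prod>i\<in>N-{0}. \<Sum>s\<in>Z. \<bar>z i s\<bar>)"
      have MM: "M = (\<Sum>s\<in>Z. \<bar>z 0 s\<bar>) * M0" unfolding M_def M0_def by (rule prod.remove[OF finN n0])
      have pt: "\<bar>Q S \<tau> t\<bar> \<le> \<bar>z 0 (t - \<tau>!0)\<bar> * M0" for t
      proof -
        have "\<bar>Q S \<tau> t\<bar> = \<bar>z 0 (t - \<tau>!0)\<bar> * (\<Prod>i\<in>N-{0}. \<bar>z i (t - \<tau>!i)\<bar>)"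
          unfolding Qz by (rule prod.remove[OF finN n0])
        also have "\<dots> \<le> \<bar>z 0 (t - \<tau>!0)\<bar> * M0" unfolding M0_def
        proof (intro mult_left_mono prod_mono conjI)
          fix i assume "i \<in> N - {0}"
          show "\<bar>z i (t - \<tau>!i)\<bar> \<le> (\<Sum>s\<in>Z. \<bar>z i s\<bar>)"
          proof (cases "t - \<tau>!i \<in> Z")
            case True then show ?thesis by (rule member_le_sum[where f="\<lambda>s. \<bar>z i s\<bar>"]) (auto simp: finZ)
          next
            case False then show ?thesis using zZ by (simp add: sum_nonneg)
          qed
        qed auto
        finally show ?thesis .
      qed
      have "(\<Sum>t\<in>Tset. \<bar>Q S \<tau> t\<bar>) \<le> (\<Sum>t\<in>Tset. \<bar>z 0 (t - \<tau>!0)\<bar> * M0)"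
        by (rule sum_mono) (rule pt)
      also have "\<dots> = (\<Sum>t\<in>Tset. \<bar>z 0 (t - \<tau>!0)\<bar>) * M0" by (simp add: sum_distrib_right)
      also have "\<dots> \<le> (\<Sum>s\<in>Z. \<bar>z 0 s\<bar>) * M0"
        by (intro mult_right_mono shift_sum[where g="\<lambda>s. \<bar>z 0 s\<bar>"])
           (auto simp: finT finZ zZ M0_def intro!: prod_nonneg sum_nonneg)
      also have "\<dots> = M" by (simp add: MM)
      finally show ?thesis .
    qed
    have pt2: "(TS S t)^2 \<le> (\<Sum>\<tau>\<in>SH. (H \<tau>)^2 * \<bar>Q S \<tau> t\<bar>) * M" for t
    proof -
      have "\<bar>TS S t\<bar> \<le> (\<Sum>\<tau>\<in>SH. \<bar>H \<tau>\<bar> * \<bar>Q S \<tau> t\<bar>)"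
        unfolding TS_def by (rule order_trans[OF sum_abs]) (simp add: abs_mult)
      then have "(TS S t)^2 \<le> (\<Sum>\<tau>\<in>SH. \<bar>H \<tau>\<bar> * \<bar>Q S \<tau> t\<bar>)^2"
        by (metis abs_ge_zero power2_abs power_mono)
      also have "\<dots> = (\<Sum>\<tau>\<in>SH. (\<bar>H \<tau>\<bar> * sqrt \<bar>Q S \<tau> t\<bar>) * sqrt \<bar>Q S \<tau> t\<bar>)^2"
        by (simp add: mult.assoc)
      also have "\<dots> \<le> (\<Sum>\<tau>\<in>SH. (\<bar>H \<tau>\<bar> * sqrt \<bar>Q S \<tau> t\<bar>)^2) * (\<Sum>\<tau>\<in>SH. (sqrt \<bar>Q S \<tau> t\<bar>)^2)"
        by (rule Cauchy_Schwarz_ineq_sum)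
      also have "\<dots> = (\<Sum>\<tau>\<in>SH. (H \<tau>)^2 * \<bar>Q S \<tau> t\<bar>) * (\<Sum>\<tau>\<in>SH. \<bar>Q S \<tau> t\<bar>)"
        by (simp add: power_mult_distrib)
      also have "\<dots> \<le> (\<Sum>\<tau>\<in>SH. (H \<tau>)^2 * \<bar>Q S \<tau> t\<bar>) * M"
        by (intro mult_left_mono sumtau) (auto intro: sum_nonneg)
      finally show ?thesis .
    qed
    have "(\<Sum>t\<in>Tset. (TS S t)^2) \<le> (\<Sum>t\<in>Tset. (\<Sum>\<tau>\<in>SH. (H \<tau>)^2 * \<bar>Q S \<tau> t\<bar>) * M)"
      by (rule sum_mono) (rule pt2)
    also have "\<dots> = M * (\<Sum>\<tau>\<in>SH. (H \<tau>)^2 * (\<Sum>t\<in>Tset. \<bar>Q S \<tau> t\<bar>))"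
      by (simp add: sum_distrib_left sum_distrib_right sum.swap[of _ Tset] mult_ac)
    also have "\<dots> \<le> M * (\<Sum>\<tau>\<in>SH. (H \<tau>)^2 * M)"
      by (intro mult_left_mono sum_mono sumt M0) auto
    also have "\<dots> = (M * sqrt (\<Sum>\<tau>\<in>SH. (H \<tau>)^2))^2"
      by (simp add: power_mult_distrib sum_nonneg sum_distrib_left sum_distrib_right power2_eq_square mult_ac)
    finally have "L2_set (TS S) Tset \<le> sqrt ((M * sqrt (\<Sum>\<tau>\<in>SH. (H \<tau>)^2))^2)"
      unfolding L2_set_def by (rule real_sqrt_le_mono)
    also have "\<dots> = M * ker_norm n 2 H" using M0 by (simp add: kn2 abs_mult sum_nonneg)
    finally show ?thesis by (simp add: Mv mult.commute)
  qed
  have B2: "L2_set (TS S) Tset \<le> ker_norm n 1 H * c2 (n - card S)" if SP: "S \<in> P" for S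
  proof -
    note SF = Sfacts[OF SP]
    define m where "m = card S"
    define k where "k = n - m"
    have nk: "n - k = m" "card (N - S) = k" using SF by (auto simp: k_def m_def)
    have c2k: "c2 (n - card S) = sig_norm (2 * real k) x ^ k * sig_norm (2 * real m) y ^ m"
      unfolding c2_def k_def[symmetric] m_def[symmetric] nk ..
    have Qb: "L2_set (Q S \<tau>) Tset \<le> sig_norm (2 * real k) x ^ k * sig_norm (2 * real m) y ^ m" for \<tau>
    proof -
      define Px where "Px = (\<lambda>t. \<Prod>i\<in>N-S. x (t - \<tau>!i))"
      define Py where "Py = (\<lambda>t. \<Prod>i\<in>S. y (t - \<tau>!i))"
      define X where "X = sig_norm (2 * real k) x"
      define Y where "Y = sig_norm (2 * real m) y"
      have X0: "X \<ge> 0" and Y0: "Y \<ge> 0" by (simp_all add: X_def Y_def sn0)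
      have Qe: "Q S \<tau> t = Px t * Py t" for t by (simp add: Q_def Px_def Py_def mult.commute)
      have sy: "(\<Sum>t\<in>Tset. (Py t)^2) \<le> Y ^ (2*m)"
      proof -
        have "(\<Sum>t\<in>Tset. (Py t)^2) = (\<Sum>t\<in>Tset. \<Prod>i\<in>S. (y (t - \<tau>!i))^2)"
          by (simp add: Py_def prod_power_distrib)
        also have "\<dots> \<le> (\<Sum>s\<in>Z. \<bar>y s\<bar> ^ (2*m))"
          by (rule prod_shift_bound) (use SF finT finZ yZ in \<open>auto simp: m_def\<close>)
        also have "\<dots> = Y ^ (2*m)" unfolding Y_def
          by (rule sig_norm_pow[symmetric]) (use finZ yZ SF in \<open>auto simp: m_def\<close>)
        finally show ?thesis .
      qed
      have L2e: "L2_set (Q S \<tau>) Tset = sqrt (\<Sum>t\<in>Tset. (Px t)^2 * (Py t)^2)"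
        by (simp add: L2_set_def Qe power_mult_distrib)
      show ?thesis
      proof (cases "k = 0")
        case True
        then have "N - S = {}" using nk(2) finN by auto
        then have "Px t = 1" for t unfolding Px_def by (metis prod.empty)
        then have "L2_set (Q S \<tau>) Tset = sqrt (\<Sum>t\<in>Tset. (Py t)^2)" by (simp add: L2e)
        also have "\<dots> \<le> sqrt ((Y^m)^2)" using sy by (intro real_sqrt_le_mono) (simp add: power_mult[symmetric] mult.commute)
        also have "\<dots> = Y^m" using Y0 by simp
        finally show ?thesis using True by (simp add: Y_def)
      next
        case False
        have sx: "(\<Sum>t\<in>Tset. (Px t)^2) \<le> X ^ (2*k)"
        proof -
          have "(\<Sum>t\<in>Tset. (Px t)^2) = (\<Sum>t\<in>Tset. \<Prod>i\<in>N-S. (x (t - \<tau>!i))^2)"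
            by (simp add: Px_def prod_power_distrib)
          also have "\<dots> \<le> (\<Sum>s\<in>Z. \<bar>x s\<bar> ^ (2*k))"
            by (rule prod_shift_bound) (use nk False finN finT finZ xZ in auto)
          also have "\<dots> = X ^ (2*k)" unfolding X_def
            by (rule sig_norm_pow[symmetric]) (use finZ xZ False in auto)
          finally show ?thesis .
        qed
        have "(\<Sum>t\<in>Tset. (Px t)^2 * (Py t)^2) \<le> (\<Sum>t\<in>Tset. (Px t)^2) * (\<Sum>t\<in>Tset. (Py t)^2)"
          by (rule sum_mult_le) (auto simp: finT)
        also have "\<dots> \<le> X ^ (2*k) * Y ^ (2*m)"
          using sx sy by (intro mult_mono) (auto intro: sum_nonneg)
        also have "\<dots> = (X^k * Y^m)^2" by (simp add: power_mult power_mult_distrib mult.commute)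
        finally have "L2_set (Q S \<tau>) Tset \<le> sqrt ((X^k * Y^m)^2)" unfolding L2e by (rule real_sqrt_le_mono)
        also have "\<dots> = X^k * Y^m" using X0 Y0 by simp
        finally show ?thesis by (simp add: X_def Y_def)
      qed
    qed
    have "L2_set (TS S) Tset = L2_set (\<lambda>t. \<Sum>\<tau>\<in>SH. H \<tau> * Q S \<tau> t) Tset" by (simp add: TS_def)
    also have "\<dots> \<le> (\<Sum>\<tau>\<in>SH. L2_set (\<lambda>t. H \<tau> * Q S \<tau> t) Tset)" by (rule L2_set_sum_le[OF finSH])
    also have "\<dots> = (\<Sum>\<tau>\<in>SH. \<bar>H \<tau>\<bar> * L2_set (Q S \<tau>) Tset)" by (simp add: L2_scale)
    also have "\<dots> \<le> (\<Sum>\<tau>\<in>SH. \<bar>H \<tau>\<bar> * c2 (n - card S))"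
      unfolding c2k by (intro sum_mono mult_left_mono Qb) auto
    also have "\<dots> = ker_norm n 1 H * c2 (n - card S)" by (simp add: kn1 sum_distrib_right)
    finally show ?thesis .
  qed
  have kn0: "ker_norm n p H \<ge> 0" for p unfolding ker_norm_def by simp
  have final: "sig_norm 2 D \<le> K * (\<Sum>k<n. (exp 1 * real n / real k) ^ k * c k)"
    if "\<And>S. S \<in> P \<Longrightarrow> L2_set (TS S) Tset \<le> K * c (n - card S)" "K \<ge> 0" "\<And>k. c k \<ge> 0" for K c
  proof -
    have "sig_norm 2 D \<le> (\<Sum>S\<in>P. K * c (n - card S))"
      using step1 sum_mono[of P "\<lambda>S. L2_set (TS S) Tset" "\<lambda>S. K * c (n - card S)", OF that(1)] by linarith
    also have "\<dots> = (\<Sum>k<n. real (n choose k) * (K * c k))"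
      unfolding P_def N_def by (rule count_subsets)
    also have "\<dots> \<le> (\<Sum>k<n. (exp 1 * real n / real k) ^ k * (K * c k))"
      by (intro sum_mono mult_right_mono binom_bound) (use that in auto)
    also have "\<dots> = K * (\<Sum>k<n. (exp 1 * real n / real k) ^ k * c k)"
      by (simp add: sum_distrib_left algebra_simps)
    finally show ?thesis .
  qed
  have R1: "sig_norm 2 D \<le> ker_norm n 2 H * (\<Sum>k<n. (exp 1 * real n / real k) ^ k * c1 k)"
    by (rule final[OF B1 kn0]) (simp_all add: c1_def sn0)
  have R2: "sig_norm 2 D \<le> ker_norm n 1 H * (\<Sum>k<n. (exp 1 * real n / real k) ^ k * c2 k)"
    by (rule final[OF B2 kn0]) (simp_all add: c2_def sn0)
  show ?thesis using R1 R2 unfolding D_def c1_def c2_def by (simp add: mult.assoc)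
qed

end
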